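(* Let $\mathcal{A}$ be a central and essential arrangement in $\mathbb{Q}^l$ as in the context, and let $p$ be a good prime for $\mathcal{A}$. Then $\mathcal{I}(\bar{\mathcal{A}})=\mathcal{I}(\bar{\mathcal{A}}_p)$ if and only if $\mathfrak{I}(\mathcal{A})=\mathfrak{I}(\mathcal{A}_p)$.
   Context: $\mathcal{A}=\{H_1,\dots,H_n\}$ is an arrangement of $n$ distinct, linearly ordered linear hyperplanes in $\mathbb{Q}^l$ (central) such that $\bigcap_i H_i=\{0\}$ (essential). For each $i$, $H_i=\{\alpha_i=0\}$ with $\alpha_i\in\mathbb{Z}[x_1,\dots,x_l]$ a nonzero homogeneous linear form whose coefficients are not all divisible by any prime; $Q(\mathcal{A})=\prod_i\alpha_i$. For a prime $p$, let $\pi_p:\mathbb{Z}[x_1,\dots,x_l]\to\mathbb{F}_p[x_1,\dots,x_l]$ be reduction mod $p$ and $(\alpha_i)_p=\pi_p(\alpha_i)$. $p$ is good for $\mathcal{A}$ if $\pi_p(Q(\mathcal{A}))$ is reduced, equivalently $(\alpha_i)_p$ and $(\alpha_j)_p$ are not scalar multiples of each other for all $i<j$. For good $p$, $\mathcal{A}_p=\{(H_1)_p,\dots,(H_n)_p\}$ is the arrangement in $\mathbb{F}_p^l$ with $(H_i)_p=\{(\alpha_i)_p=0\}$, in this order. For an arrangement $\mathcal{B}=\{G_1,\dots,G_n\}$ in $K^l$: its projectivization $\bar{\mathcal{B}}=\{\bar G_1,\dots,\bar G_{n+1}\}$ in $K\mathbb{P}^l$ consists of the projective closures $\bar G_i$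 ($i\le n$) and the hyperplane at infinity $\bar G_{n+1}$; $\mathcal{I}(\bar{\mathcal{B}})=\{(i_1,\dots,i_{l+1}) : 1\le i_1<\dots<i_{l+1}\le n+1,\ \bar G_{i_1}\cap\dots\cap\bar G_{i_{l+1}}\neq\emptyset\}$; and $\mathfrak{I}(\mathcal{B})=\{(i_1,\dots,i_l): 1\le i_1<\dots<i_l\le n,\ \dim(G_{i_1}\cap\dots\cap G_{i_l})=0\}$. *)

theory Defs
  imports "HOL-Computational_Algebra.Primes" "Berlekamp_Zassenhaus.Finite_Field"
begin

text \<open>An (affine) hyperplane in K^l is given by a pair (a, c) with a a coefficient
  function (coefficients a 1, ..., a l) and c a constant: G = {x. a.x = c}.\<close>

type_synonym 'k hyp = "(nat \<Rightarrow> 'k) \<times> 'k"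

definition vecs :: "nat \<Rightarrow> (nat \<Rightarrow> 'k::zero) set" where
  "vecs l = {x. \<forall>j. j \<notin> {1..l} \<longrightarrow> x j = 0}"

definition aff_hyp :: "nat \<Rightarrow> 'k::field hyp \<Rightarrow> (nat \<Rightarrow> 'k) set" where
  "aff_hyp l h = {x \<in> vecs l. (\<Sum>j=1..l. fst h j * x j) = snd h}"

text \<open>Projective space KP^l: points are represented by their nonzero homogeneous
  coordinate vectors (x 0 : x 1 : ... : x l); a projective hyperplane is represented by the
  (scaling-closed) set of nonzero homogeneous coordinate vectors of its points, so an
  intersection of projective hyperplanes is nonempty iff the intersection of these sets is.\<close>

definition hvecs :: "nat \<Rightarrow> (nat \<Rightarrow> 'k::zero) set" where
  "hvecs l = {x. (\<forall>j>l. x j = 0) \<and> (\<exists>j. x j \<noteq> 0)}"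

text \<open>Projective closure of {a.x = c}: its homogenization {a.x = c x_0}.\<close>
definition proj_closure :: "nat \<Rightarrow> 'k::field hyp \<Rightarrow> (nat \<Rightarrow> 'k) set" where
  "proj_closure l h = {x \<in> hvecs l. (\<Sum>j=1..l. fst h j * x j) = snd h * x 0}"

definition hyp_infinity :: "nat \<Rightarrow> (nat \<Rightarrow> 'k::field) set" where
  "hyp_infinity l = {x \<in> hvecs l. x 0 = 0}"

definition projectivization :: "nat \<Rightarrow> 'k::field hyp list \<Rightarrow> (nat \<Rightarrow> 'k) set list" where
  "projectivization l B = map (proj_closure l) B @ [hyp_infinity l]"

text \<open>Index tuples (i_1 < ... < i_m) are strictly increasing lists of 1-based indices.\<close>
definition I_proj :: "nat \<Rightarrow> 'k::field hyp list \<Rightarrow> nat list set" where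
  "I_proj l B = {is. length is = l + 1 \<and> sorted_wrt (<) is \<and> set is \<subseteq> {1..length B + 1} \<and>
      hvecs l \<inter> (\<Inter>i\<in>set is. projectivization l B ! (i - 1)) \<noteq> {}}"

text \<open>dim of an intersection of affine hyperplanes equals 0 iff it is a single point.\<close>
definition frakI :: "nat \<Rightarrow> 'k::field hyp list \<Rightarrow> nat list set" where
  "frakI l B = {is. length is = l \<and> sorted_wrt (<) is \<and> set is \<subseteq> {1..length B} \<and>
      (\<exists>x. vecs l \<inter> (\<Inter>i\<in>set is. aff_hyp l (B ! (i - 1))) = {x})}"

text \<open>The arrangement {alpha_i = 0} over a field K (coefficients mapped via of_int;
  for K = Q this is the inclusion, for K = F_p it is reduction mod p).\<close>
definition lin_arr :: "(nat \<Rightarrow> int) list \<Rightarrow> 'k::field hyp list" where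
  "lin_arr alphas = map (\<lambda>a. (\<lambda>j. of_int (a j), 0)) alphas"

end

theory Submission
  imports Defs
begin

lemma B_nth:
  assumes "i \<in> {1..length alphas}"
  shows "(lin_arr alphas :: 'k::field hyp list) ! (i - 1) = (\<lambda>j. of_int ((alphas ! (i-1)) j), 0)"
  using assms by (auto simp: lin_arr_def)

lemma P_nth:
  assumes "i \<in> {1..length alphas}"
  shows "projectivization l (lin_arr alphas :: 'k::field hyp list) ! (i - 1)
     = proj_closure l ((lin_arr alphas :: 'k::field hyp list) ! (i - 1))"
  using assms by (auto simp: projectivization_def lin_arr_def nth_append)

lemma P_last:
  shows "projectivization l (lin_arr alphas :: 'k::field hyp list) ! (length alphas + 1 - 1)
     = hyp_infinity l"
  by (auto simp: projectivization_def lin_arr_def nth_append)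

lemma snd_B[simp]: "k < length alphas \<Longrightarrow> snd ((lin_arr alphas :: 'k::field hyp list) ! k) = 0"
  by (simp add: lin_arr_def)

lemma fst_B[simp]: "k < length alphas \<Longrightarrow> fst ((lin_arr alphas :: 'k::field hyp list) ! k) = (\<lambda>j. of_int ((alphas ! k) j))"
  by (simp add: lin_arr_def)

lemma P_nth'[simp]: "k < length alphas \<Longrightarrow> projectivization l (lin_arr alphas :: 'k::field hyp list) ! k
     = proj_closure l ((lin_arr alphas :: 'k::field hyp list) ! k)"
  by (auto simp: projectivization_def lin_arr_def nth_append)

lemma idx: "set is \<subseteq> {1..n} \<Longrightarrow> i \<in> set is \<Longrightarrow> i - Suc 0 < n"
  by force

lemma key_inf:
  assumes "set is \<subseteq> {1..length alphas}"
  shows "hvecs l \<inter> (\<Inter>i\<in>set (is @ [length alphas + 1]). projectivization l (lin_arr alphas :: 'k::field hyp list) ! (i - 1))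
    = {x \<in> vecs l. x \<noteq> (\<lambda>_. 0) \<and> (\<forall>i\<in>set is. x \<in> aff_hyp l ((lin_arr alphas :: 'k::field hyp list)!(i-1)))}"
    (is "?L = ?R")
proof
  show "?L \<subseteq> ?R"
  proof
    fix x assume x: "x \<in> ?L"
    then have h: "x \<in> hvecs l" "x \<in> hyp_infinity l" using P_last[of l alphas] by auto
    have v: "x \<in> vecs l" unfolding vecs_def
    proof (intro CollectI allI impI)
      fix j :: nat assume "j \<notin> {1..l}"
      then have "j = 0 \<or> j > l" by auto
      then show "x j = 0" using h by (auto simp: hvecs_def hyp_infinity_def)
    qed
    have nz: "x \<noteq> (\<lambda>_. 0)" using h by (auto simp: hvecs_def)
    have "\<forall>i\<in>set is. x \<in> aff_hyp l ((lin_arr alphas :: 'k hyp list)!(i-1))"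
    proof
      fix i assume i: "i \<in> set is"
      have i': "i \<in> {1..length alphas}" using i assms by auto
      have "x \<in> projectivization l (lin_arr alphas :: 'k hyp list) ! (i - 1)" using x i by auto
      then have "x \<in> proj_closure l ((lin_arr alphas :: 'k hyp list) ! (i - 1))"
        using P_nth[OF i', of l, where 'k='k] by simp
      then show "x \<in> aff_hyp l ((lin_arr alphas :: 'k hyp list)!(i-1))"
        using v idx[OF assms i] by (auto simp: proj_closure_def aff_hyp_def)
    qed
    then show "x \<in> ?R" using v nz by auto
  qed
next
  show "?R \<subseteq> ?L"
  proof
    fix x assume x: "x \<in> ?R"
    then have v: "x \<in> vecs l" and nz: "x \<noteq> (\<lambda>_. 0)" by auto
    have h: "x \<in> hvecs l" using v nz by (auto simp: hvecs_def vecs_def)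
    have x0: "x 0 = 0" using v by (auto simp: vecs_def)
    have "x \<in> projectivization l (lin_arr alphas :: 'k hyp list) ! (i - 1)" if i: "i \<in> set (is @ [length alphas + 1])" for i
    proof (cases "i = length alphas + 1")
      case True then show ?thesis using P_last[of l alphas] h x0 by (auto simp: hyp_infinity_def)
    next
      case False
      then have i': "i \<in> set is" using i by auto
      then have "x \<in> aff_hyp l ((lin_arr alphas :: 'k hyp list)!(i-1))" using x by auto
      then show ?thesis using idx[OF assms i'] h x0
        by (auto simp: proj_closure_def aff_hyp_def)
    qed
    then show "x \<in> ?L" using h by blast
  qed
qed

lemma no_inf:
  assumes "set js \<subseteq> {1..length alphas}"
  shows "hvecs l \<inter> (\<Inter>i\<in>set js. projectivization l (lin_arr alphas :: 'k::field hyp list) ! (i - 1)) \<noteq> {}"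
proof -
  define e :: "nat \<Rightarrow> 'k" where "e = (\<lambda>j. if j = 0 then 1 else 0)"
  have h: "e \<in> hvecs l" by (auto simp: hvecs_def e_def intro: exI[of _ 0])
  have "e \<in> projectivization l (lin_arr alphas :: 'k hyp list) ! (i - 1)" if i: "i \<in> set js" for i
  proof -
    have i': "i \<in> {1..length alphas}" using i assms by auto
    show ?thesis using idx[OF assms i] h
    by (auto simp: proj_closure_def e_def)
  qed
  then show ?thesis using h by blast
qed

lemma frak_iff:
  assumes "set is \<subseteq> {1..length alphas}"
  shows "(\<exists>x. vecs l \<inter> (\<Inter>i\<in>set is. aff_hyp l ((lin_arr alphas :: 'k::field hyp list) ! (i - 1))) = {x})
    \<longleftrightarrow> \<not> (\<exists>x\<in>vecs l. x \<noteq> (\<lambda>_. 0) \<and> (\<forall>i\<in>set is. x \<in> aff_hyp l ((lin_arr alphas :: 'k hyp list)!(i-1))))"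
proof -
  have z: "(\<lambda>_. 0) \<in> vecs l \<inter> (\<Inter>i\<in>set is. aff_hyp l ((lin_arr alphas :: 'k hyp list) ! (i - 1)))"
  proof -
    show ?thesis using idx[OF assms] by (auto simp: vecs_def aff_hyp_def)
  qed
  show ?thesis
  proof
    assume "\<exists>x. vecs l \<inter> (\<Inter>i\<in>set is. aff_hyp l ((lin_arr alphas :: 'k::field hyp list) ! (i - 1))) = {x}"
    then obtain x where "vecs l \<inter> (\<Inter>i\<in>set is. aff_hyp l ((lin_arr alphas :: 'k::field hyp list) ! (i - 1))) = {x}" by blast
    then show "\<not> (\<exists>x\<in>vecs l. x \<noteq> (\<lambda>_. 0) \<and> (\<forall>i\<in>set is. x \<in> aff_hyp l ((lin_arr alphas :: 'k hyp list)!(i-1))))"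
      using z by auto
  next
    assume "\<not> (\<exists>x\<in>vecs l. x \<noteq> (\<lambda>_. 0) \<and> (\<forall>i\<in>set is. x \<in> aff_hyp l ((lin_arr alphas :: 'k hyp list)!(i-1))))"
    then have "vecs l \<inter> (\<Inter>i\<in>set is. aff_hyp l ((lin_arr alphas :: 'k::field hyp list) ! (i - 1))) = {(\<lambda>_. 0)}"
      using z by auto
    then show "\<exists>x. vecs l \<inter> (\<Inter>i\<in>set is. aff_hyp l ((lin_arr alphas :: 'k::field hyp list) ! (i - 1))) = {x}" by blast
  qed
qed

lemma sorted_last:
  fixes js :: "nat list" and n :: nat
  assumes "sorted_wrt (<) js" "set js \<subseteq> {1..n+1}" "n + 1 \<in> set js"
  shows "js = butlast js @ [n+1]" "set (butlast js) \<subseteq> {1..n}"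
proof -
  have ne: "js \<noteq> []" using assms by auto
  have e: "js = butlast js @ [last js]" using ne by simp
  have lt: "\<forall>x\<in>set (butlast js). x < last js" using assms(1) e
    by (metis list.set_intros(1) sorted_wrt_append)
  have "last js \<le> n + 1" using assms(2) ne last_in_set by fastforce
  moreover have "n + 1 \<le> last js"
  proof -
    have "n+1 \<in> set (butlast js) \<or> n+1 = last js" using assms(3) e
      by (metis Un_iff empty_iff empty_set list.simps(15) set_append insert_iff)
    then show ?thesis
    proof
      assume "n + 1 \<in> set (butlast js)"
      then have "n + 1 < last js" using lt by blast
      then show ?thesis by simp
    qed simp
  qed
  ultimately have L: "last js = n + 1" by simp
  then show "js = butlast js @ [n+1]" using e by simp
  show "set (butlast js) \<subseteq> {1..n}" using lt L assms(2) e
    by (smt (verit) atLeastAtMost_iff in_set_butlastD less_Suc_eq_le subset_iff Suc_eq_plus1)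
qed

definition Pk :: "nat \<Rightarrow> (nat \<Rightarrow> int) list \<Rightarrow> 'k::field itself \<Rightarrow> nat list \<Rightarrow> bool" where
  "Pk l alphas t is = (\<exists>x\<in>vecs l. x \<noteq> (\<lambda>_. 0) \<and> (\<forall>i\<in>set is. x \<in> aff_hyp l ((lin_arr alphas :: 'k hyp list)!(i-1))))"

lemma frak_char:
  "frakI l (lin_arr alphas :: 'k::field hyp list) = {is. length is = l \<and> sorted_wrt (<) is \<and> set is \<subseteq> {1..length alphas}
     \<and> \<not> Pk l alphas TYPE('k) is}"
  using frak_iff[of _ alphas l] unfolding frakI_def Pk_def
  by (auto simp: lin_arr_def)

lemma proj_char:
  "I_proj l (lin_arr alphas :: 'k::field hyp list) = {js. length js = l + 1 \<and> sorted_wrt (<) js \<and> set js \<subseteq> {1..length alphas + 1}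
     \<and> (length alphas + 1 \<in> set js \<longrightarrow> Pk l alphas TYPE('k) (butlast js))}"
proof -
  have H: "hvecs l \<inter> (\<Inter>i\<in>set js. projectivization l (lin_arr alphas :: 'k hyp list) ! (i - 1)) \<noteq> {}
     \<longleftrightarrow> (length alphas + 1 \<in> set js \<longrightarrow> Pk l alphas TYPE('k) (butlast js))"
    if "sorted_wrt (<) js" "set js \<subseteq> {1..length alphas + 1}" for js
  proof (cases "length alphas + 1 \<in> set js")
    case True
    note s = sorted_last[OF that True]
    obtain bs where bs: "js = bs @ [length alphas + 1]" using s(1) by blast
    have sb: "set bs \<subseteq> {1..length alphas}" using s(2) bs by simp
    have "hvecs l \<inter> (\<Inter>i\<in>set js. projectivization l (lin_arr alphas :: 'k hyp list) ! (i - 1))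
      = {x \<in> vecs l. x \<noteq> (\<lambda>_. 0) \<and> (\<forall>i\<in>set bs. x \<in> aff_hyp l ((lin_arr alphas :: 'k::field hyp list)!(i-1)))}"
      unfolding bs by (rule key_inf[OF sb])
    moreover have "butlast js = bs" using bs by simp
    ultimately show ?thesis using True unfolding Pk_def by blast
  next
    case False
    have "set js \<subseteq> {1..length alphas}"
    proof
      fix i assume "i \<in> set js"
      then have "i \<in> {1..length alphas+1}" "i \<noteq> length alphas + 1" using that(2) False by auto
      then show "i \<in> {1..length alphas}" by auto
    qed
    then show ?thesis using no_inf[of js alphas l, where 'k='k] False by blast
  qed
  have len: "length (lin_arr alphas :: 'k hyp list) = length alphas" by (simp add: lin_arr_def)
  show ?thesis unfolding I_proj_def len
    by (intro Collect_cong) (use H in blast)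
qed

theorem lemma4p3:
  fixes alphas :: "(nat \<Rightarrow> int) list" and l :: nat
    and p_type :: "'p::prime_card itself"
  assumes supp: "\<forall>a\<in>set alphas. \<forall>j. j \<notin> {1..l} \<longrightarrow> a j = 0"
    and nonzero: "\<forall>a\<in>set alphas. \<exists>j\<in>{1..l}. a j \<noteq> 0"
    and primitive: "\<forall>a\<in>set alphas. \<not> (\<exists>q::int. prime q \<and> (\<forall>j\<in>{1..l}. q dvd a j))"
    and distinct_hyps: "distinct (map (aff_hyp l) (lin_arr alphas :: rat hyp list))"
    and essential: "vecs l \<inter> (\<Inter>h\<in>set (lin_arr alphas :: rat hyp list). aff_hyp l h) = {(\<lambda>_. 0)}"
    and good: "\<forall>i j. i < j \<and> j < length alphas \<longrightarrow>
        \<not> (\<exists>c::'p mod_ring. (\<lambda>k. of_int ((alphas ! i) k)) = (\<lambda>k. c * of_int ((alphas ! j) k))) \<and>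
        \<not> (\<exists>c::'p mod_ring. (\<lambda>k. of_int ((alphas ! j) k)) = (\<lambda>k. c * of_int ((alphas ! i) k)))"
  shows "I_proj l (lin_arr alphas :: rat hyp list) = I_proj l (lin_arr alphas :: 'p mod_ring hyp list)
     \<longleftrightarrow> frakI l (lin_arr alphas :: rat hyp list) = frakI l (lin_arr alphas :: 'p mod_ring hyp list)"
proof
  assume H: "I_proj l (lin_arr alphas :: rat hyp list) = I_proj l (lin_arr alphas :: 'p mod_ring hyp list)"
  have "Pk l alphas TYPE(rat) is = Pk l alphas TYPE('p mod_ring) is"
    if "length is = l" "sorted_wrt (<) is" "set is \<subseteq> {1..length alphas}" for "is"
  proof -
    let ?js = "is @ [length alphas + 1]"
    have "length ?js = l + 1" "sorted_wrt (<) ?js" "set ?js \<subseteq> {1..length alphas + 1}"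
      using that by (auto simp: sorted_wrt_append)
    moreover have "?js \<in> I_proj l (lin_arr alphas :: rat hyp list) \<longleftrightarrow> ?js \<in> I_proj l (lin_arr alphas :: 'p mod_ring hyp list)"
      using H by simp
    ultimately show ?thesis unfolding proj_char by simp
  qed
  then show "frakI l (lin_arr alphas :: rat hyp list) = frakI l (lin_arr alphas :: 'p mod_ring hyp list)"
    unfolding frak_char by blast
next
  assume H: "frakI l (lin_arr alphas :: rat hyp list) = frakI l (lin_arr alphas :: 'p mod_ring hyp list)"
  have "Pk l alphas TYPE(rat) (butlast js) = Pk l alphas TYPE('p mod_ring) (butlast js)"
    if "length js = l + 1" "sorted_wrt (<) js" "set js \<subseteq> {1..length alphas + 1}" "length alphas + 1 \<in> set js" for js
  proof -
    note s = sorted_last[OF that(2,3,4)]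
    have "length (butlast js) = l" "sorted_wrt (<) (butlast js)"
      using that(1,2) by (auto simp: sorted_wrt_append) (metis s(1) sorted_wrt_append that(2))
    then show ?thesis using H s(2) unfolding frak_char by (auto simp: set_eq_iff)
  qed
  then show "I_proj l (lin_arr alphas :: rat hyp list) = I_proj l (lin_arr alphas :: 'p mod_ring hyp list)"
    unfolding proj_char by blast
qed

end
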